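(* The symmetric precubical set of labels $\mathrm{sh}_{\square_S}\mathcal{L}_{\square_S}(!\Sigma)$ is isomorphic to the following symmetric precubical set $!^S\Sigma$: $(!^S\Sigma)_0=\{()\}$ (the empty word); $(!^S\Sigma)_n=\Sigma^n$ for $n\ge1$; $\partial_i^0(a_1,\dots,a_n)=\partial_i^1(a_1,\dots,a_n)=(a_1,\dots,\widehat{a_i},\dots,a_n)$ (the letter $a_i$ removed); and $s_i(a_1,\dots,a_n)=(a_1,\dots,a_{i-1},a_{i+1},a_i,a_{i+2},\dots,a_n)$ for $1\le i\le n-1$.
   Context: $[0]=\{()\}$, $[n]=\{0,1\}^n$ ($n\ge1$) with the product order; ${\rm PoSet}$: posets with strictly increasing maps. Face maps $\delta_i^\alpha:[n-1]\to[n]$ insert $\alpha$ at position $i$; $\square$ is the subcategory of ${\rm PoSet}$ with objects $[n]$, $n\ge0$, generated by face maps; its presheaves are precubical sets. Symmetry maps $\sigma_i:[n]\to[n]$ ($n\ge2$, $1\le i\le n-1$) swap coordinates $i$ and $i+1$. $\square_S$ is the subcategory of ${\rm PoSet}$ with objects $[n]$ generated by the face maps and the symmetry maps; its presheaves are symmetric precubical sets, with $\partial_i^\alpha=(\delta_i^\alpha)^*$ and $s_i=(\sigma_i)^*$. $\square_S[p]=\square_S(-,[p])$ and $\partial\square_S[p]$ is its subpresheaf of cubes of dimension $<p$. $\mathcal L_{\square_S}$ is the left adjoint of restriction from symmetric precubical sets to precubical sets. $\Sigma$ is a non-empty set; $!\Sigma$ is the precubical set with $(!\Sigma)_0=\{()\}$,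 $(!\Sigma)_n=\Sigma^n$, $\partial_i^0=\partial_i^1$ deleting the $i$-th letter. $\mathrm{sh}_{\square_S}$ is the left adjoint of the inclusion of the full subcategory of symmetric precubical sets orthogonal to the maps $\square_S[p]\sqcup_{\partial\square_S[p]}\square_S[p]\to\square_S[p]$, $p\ge2$. *)

theory Defs
  imports Main
begin

text \<open>The poset [n] = {0,1}^n is represented by the set of boolean lists of length n
  (coordinates 1..n are list positions 0..n-1). A morphism [m] -> [n] is represented
  as a function on boolean lists, made extensional by restricting it to lists of length m.\<close>

type_synonym cmap = "bool list \<Rightarrow> bool list"

definition rst :: "nat \<Rightarrow> cmap \<Rightarrow> cmap" where
  "rst m f = (\<lambda>x. if length x = m then f x else undefined)"

definition face :: "nat \<Rightarrow> 'x \<Rightarrow> 'x list \<Rightarrow> 'x list" where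
  "face i a x = take (i - 1) x @ a # drop (i - 1) x"

definition swp :: "nat \<Rightarrow> 'x list \<Rightarrow> 'x list" where
  "swp i x = take (i - 1) x @ [x ! i, x ! (i - 1)] @ drop (i + 1) x"

definition del :: "nat \<Rightarrow> 'x list \<Rightarrow> 'x list" where
  "del i x = take (i - 1) x @ drop i x"

text \<open>Morphisms of the precubical site: subcategory generated by face maps.
  pmor m n f means f is a morphism [m] -> [n].\<close>
inductive pmor :: "nat \<Rightarrow> nat \<Rightarrow> cmap \<Rightarrow> bool" where
  pid: "pmor n n (rst n id)"
| pface: "1 \<le> i \<Longrightarrow> i \<le> Suc n \<Longrightarrow> pmor n (Suc n) (rst n (face i a))"
| pcomp: "pmor m n f \<Longrightarrow> pmor n k g \<Longrightarrow> pmor m k (rst m (g \<circ> f))"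

text \<open>Morphisms of the symmetric precubical site: generated by face and symmetry maps.\<close>
inductive smor :: "nat \<Rightarrow> nat \<Rightarrow> cmap \<Rightarrow> bool" where
  sid: "smor n n (rst n id)"
| sface: "1 \<le> i \<Longrightarrow> i \<le> Suc n \<Longrightarrow> smor n (Suc n) (rst n (face i a))"
| ssym: "1 \<le> i \<Longrightarrow> i < n \<Longrightarrow> smor n n (rst n (swp i))"
| scomp: "smor m n f \<Longrightarrow> smor n k g \<Longrightarrow> smor m k (rst m (g \<circ> f))"

definition presheaf ::
  "(nat \<Rightarrow> nat \<Rightarrow> cmap \<Rightarrow> bool) \<Rightarrow> (nat \<Rightarrow> 'a set) \<Rightarrow> (nat \<Rightarrow> nat \<Rightarrow> cmap \<Rightarrow> 'a \<Rightarrow> 'a) \<Rightarrow> bool" where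
  "presheaf M X act \<longleftrightarrow>
     (\<forall>m n f x. M m n f \<and> x \<in> X n \<longrightarrow> act m n f x \<in> X m) \<and>
     (\<forall>n x. x \<in> X n \<longrightarrow> act n n (rst n id) x = x) \<and>
     (\<forall>m n k f g x. M m n f \<and> M n k g \<and> x \<in> X k \<longrightarrow>
        act m k (rst m (g \<circ> f)) x = act m n f (act n k g x))"

definition nat_trans ::
  "(nat \<Rightarrow> nat \<Rightarrow> cmap \<Rightarrow> bool) \<Rightarrow> (nat \<Rightarrow> 'a set) \<Rightarrow> (nat \<Rightarrow> nat \<Rightarrow> cmap \<Rightarrow> 'a \<Rightarrow> 'a)
    \<Rightarrow> (nat \<Rightarrow> 'b set) \<Rightarrow> (nat \<Rightarrow> nat \<Rightarrow> cmap \<Rightarrow> 'b \<Rightarrow> 'b) \<Rightarrow> (nat \<Rightarrow> 'a \<Rightarrow> 'b) \<Rightarrow> bool" where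
  "nat_trans M X actX Y actY h \<longleftrightarrow>
     (\<forall>n x. x \<in> X n \<longrightarrow> h n x \<in> Y n) \<and>
     (\<forall>m n f x. M m n f \<and> x \<in> X n \<longrightarrow> h m (actX m n f x) = actY m n f (h n x))"

definition eq_on :: "(nat \<Rightarrow> 'a set) \<Rightarrow> (nat \<Rightarrow> 'a \<Rightarrow> 'b) \<Rightarrow> (nat \<Rightarrow> 'a \<Rightarrow> 'b) \<Rightarrow> bool" where
  "eq_on X h h' \<longleftrightarrow> (\<forall>n. \<forall>x\<in>X n. h n x = h' n x)"

definition rep :: "nat \<Rightarrow> nat \<Rightarrow> cmap set" where
  "rep p m = {f. smor m p f}"

definition rep_act :: "nat \<Rightarrow> nat \<Rightarrow> cmap \<Rightarrow> cmap \<Rightarrow> cmap" where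
  "rep_act m n g f = rst m (f \<circ> g)"

text \<open>The pushout square_S[p] \<squnion>_{boundary square_S[p]} square_S[p], computed pointwise:
  in dimensions m < p (the boundary) both copies are identified (tag False),
  in dimension p there are two copies (tags False / True).\<close>
definition po :: "nat \<Rightarrow> nat \<Rightarrow> (bool \<times> cmap) set" where
  "po p m = {(b, f). smor m p f \<and> (m < p \<longrightarrow> \<not> b)}"

definition po_act :: "nat \<Rightarrow> nat \<Rightarrow> nat \<Rightarrow> cmap \<Rightarrow> bool \<times> cmap \<Rightarrow> bool \<times> cmap" where
  "po_act p m n g bf = (fst bf \<and> \<not> m < p, rst m (snd bf \<circ> g))"

definition codiag :: "nat \<Rightarrow> bool \<times> cmap \<Rightarrow> cmap" where
  "codiag n bf = snd bf"

definition orthogonal_to ::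
  "nat \<Rightarrow> (nat \<Rightarrow> 'b set) \<Rightarrow> (nat \<Rightarrow> nat \<Rightarrow> cmap \<Rightarrow> 'b \<Rightarrow> 'b) \<Rightarrow> bool" where
  "orthogonal_to p Y actY \<longleftrightarrow>
     (\<forall>h. nat_trans smor (po p) (po_act p) Y actY h \<longrightarrow>
        (\<exists>g. nat_trans smor (rep p) rep_act Y actY g \<and>
             eq_on (po p) (\<lambda>n x. g n (codiag n x)) h \<and>
             (\<forall>g'. nat_trans smor (rep p) rep_act Y actY g' \<and>
                   eq_on (po p) (\<lambda>n x. g' n (codiag n x)) h \<longrightarrow> eq_on (rep p) g g')))"

text \<open>Symmetric precubical sets in the reflective subcategory (target of sh).\<close>
definition sheaf :: "(nat \<Rightarrow> 'b set) \<Rightarrow> (nat \<Rightarrow> nat \<Rightarrow> cmap \<Rightarrow> 'b \<Rightarrow> 'b) \<Rightarrow> bool" where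
  "sheaf Y actY \<longleftrightarrow> presheaf smor Y actY \<and> (\<forall>p\<ge>2. orthogonal_to p Y actY)"

text \<open>Words of length n over Sigma: carriers of !Sigma and !^S Sigma.\<close>
definition words :: "'a set \<Rightarrow> nat \<Rightarrow> 'a list set" where
  "words S n = {w. length w = n \<and> set w \<subseteq> S}"

end

theory Submission
  imports Defs
begin

lemma face_len[simp]: "i - 1 \<le> length x \<Longrightarrow> length (face i a x) = Suc (length x)"
  by (simp add: face_def)

lemma face_nth: "i - 1 \<le> length x \<Longrightarrow> p < Suc (length x) \<Longrightarrow>
  face i a x ! p = (if p < i - 1 then x ! p else if p = i - 1 then a else x ! (p - 1))"
  by (auto simp: face_def nth_append min_def nth_Cons split: nat.splits; (rule arg_cong[where f="nth x"]; arith)?)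

lemma swp_len[simp]: "1 \<le> i \<Longrightarrow> i < length x \<Longrightarrow> length (swp i x) = length x"
  by (simp add: swp_def)

lemma swp_nth: "1 \<le> i \<Longrightarrow> i < length x \<Longrightarrow> p < length x \<Longrightarrow>
  swp i x ! p = (if p = i - 1 then x ! i else if p = i then x ! (i - 1) else x ! p)"
  by (auto simp: swp_def nth_append min_def nth_Cons split: nat.splits; (rule arg_cong[where f="nth x"]; arith)?)

lemma del_len[simp]: "1 \<le> i \<Longrightarrow> i \<le> length x \<Longrightarrow> length (del i x) = length x - 1"
  by (simp add: del_def)

lemma del_nth: "1 \<le> i \<Longrightarrow> i \<le> length x \<Longrightarrow> p < length x - 1 \<Longrightarrow>
  del i x ! p = (if p < i - 1 then x ! p else x ! Suc p)"
  by (auto simp: del_def nth_append min_def)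


definition Inv :: "nat \<Rightarrow> nat \<Rightarrow> cmap \<Rightarrow> (nat \<Rightarrow> nat) \<Rightarrow> bool" where
 "Inv m n f \<pi> \<longleftrightarrow> (\<forall>x. length x = m \<longrightarrow> length (f x) = n) \<and> (\<forall>j<m. \<pi> j < n) \<and>
   inj_on \<pi> {..<m} \<and> (\<forall>x j. length x = m \<and> j < m \<longrightarrow> f x ! \<pi> j = x ! j) \<and>
   (\<forall>i<n. i \<notin> \<pi> ` {..<m} \<longrightarrow> (\<exists>c. \<forall>x. length x = m \<longrightarrow> f x ! i = c))"

lemma InvD:
  assumes "Inv m n f \<pi>"
  shows InvD1: "\<And>x. length x = m \<Longrightarrow> length (f x) = n"
  and InvD2: "\<And>j. j < m \<Longrightarrow> \<pi> j < n"
  and InvD3: "inj_on \<pi> {..<m}"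
  and InvD4: "\<And>x j. length x = m \<Longrightarrow> j < m \<Longrightarrow> f x ! \<pi> j = x ! j"
  and InvD5: "\<And>i. i < n \<Longrightarrow> i \<notin> \<pi> ` {..<m} \<Longrightarrow> \<exists>c. \<forall>x. length x = m \<longrightarrow> f x ! i = c"
  using assms unfolding Inv_def by blast+

lemma Inv_id: "Inv n n (rst n id) id"
  by (auto simp: Inv_def rst_def)

lemma Inv_face: "1 \<le> i \<Longrightarrow> i \<le> Suc n \<Longrightarrow>
  Inv n (Suc n) (rst n (face i a)) (\<lambda>j. if j < i - 1 then j else Suc j)"
  unfolding Inv_def
proof (intro conjI allI impI)
  assume i: "1 \<le> i" "i \<le> Suc n"
  show "inj_on (\<lambda>j. if j < i - 1 then j else Suc j) {..<n}"
    by (auto simp: inj_on_def split: if_splits)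
  fix x :: "bool list" and j assume "length x = n \<and> j < n"
  then show "rst n (face i a) x ! (if j < i - 1 then j else Suc j) = x ! j"
    using i by (auto simp: rst_def face_nth)
next
  fix k assume i: "1 \<le> i" "i \<le> Suc n" and k: "k < Suc n"
    "k \<notin> (\<lambda>j. if j < i - 1 then j else Suc j) ` {..<n}"
  have "k = i - 1"
  proof (rule ccontr)
    assume "k \<noteq> i - 1"
    then have "k \<in> (\<lambda>j. if j < i - 1 then j else Suc j) ` {..<n}"
      using k(1) i by (cases "k < i - 1") (auto intro!: image_eqI[where x="k - 1"])
    with k show False by blast
  qed
  then show "\<exists>c. \<forall>x. length x = n \<longrightarrow> rst n (face i a) x ! k = c"
    using i by (auto simp: rst_def face_nth)
qed (auto simp: rst_def)

definition swpi :: "nat \<Rightarrow> nat \<Rightarrow> nat" where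
  "swpi i j = (if j = i - 1 then i else if j = i then i - 1 else j)"

lemma Inv_swp: "1 \<le> i \<Longrightarrow> i < n \<Longrightarrow> Inv n n (rst n (swp i)) (swpi i)"
  unfolding Inv_def
proof (intro conjI allI impI)
  assume i: "1 \<le> i" "i < n"
  show "inj_on (swpi i) {..<n}"
    using i by (auto simp: inj_on_def swpi_def split: if_splits)
  fix x :: "bool list" and j assume "length x = n \<and> j < n"
  then show "rst n (swp i) x ! swpi i j = x ! j"
    using i by (auto simp: rst_def swp_nth swpi_def)
next
  fix k assume i: "1 \<le> i" "i < n" and k: "k < n" "k \<notin> swpi i ` {..<n}"
  have "k \<in> swpi i ` {..<n}"
  proof (cases "k = i \<or> k = i - 1")
    case True
    then show ?thesis using i k(1)
      by (auto simp: swpi_def image_iff intro: bexI[where x="i - 1"] bexI[where x=i])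
  next
    case False
    then show ?thesis using k(1) by (auto simp: swpi_def image_iff intro!: bexI[where x=k])
  qed
  with k show "\<exists>c. \<forall>x. length x = n \<longrightarrow> rst n (swp i) x ! k = c" by blast
qed (auto simp: rst_def swpi_def)

lemma Inv_comp: assumes f: "Inv m n f \<pi>f" and g: "Inv n k g \<pi>g"
  shows "Inv m k (rst m (g \<circ> f)) (\<pi>g \<circ> \<pi>f)"
  unfolding Inv_def
proof (intro conjI allI impI)
  show "\<And>x. length x = m \<Longrightarrow> length (rst m (g \<circ> f) x) = k"
    using f g by (auto simp: Inv_def rst_def)
  show "\<And>j. j < m \<Longrightarrow> (\<pi>g \<circ> \<pi>f) j < k"
    using f g by (auto simp: Inv_def)
  show "inj_on (\<pi>g \<circ> \<pi>f) {..<m}"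
    using f g unfolding Inv_def by (metis comp_inj_on image_subsetI inj_on_subset lessThan_iff)
  fix x :: "bool list" and j assume "length x = m \<and> j < m"
  then show "rst m (g \<circ> f) x ! (\<pi>g \<circ> \<pi>f) j = x ! j"
    using f g by (auto simp: Inv_def rst_def)
next
  fix i assume i: "i < k" "i \<notin> (\<pi>g \<circ> \<pi>f) ` {..<m}"
  show "\<exists>c. \<forall>x. length x = m \<longrightarrow> rst m (g \<circ> f) x ! i = c"
  proof (cases "i \<in> \<pi>g ` {..<n}")
    case False
    then obtain c where "\<forall>y. length y = n \<longrightarrow> g y ! i = c" using g i unfolding Inv_def by blast
    then show ?thesis using f unfolding Inv_def rst_def by auto
  next
    case True
    then obtain l where l: "l < n" "i = \<pi>g l" by auto
    then have "l \<notin> \<pi>f ` {..<m}" using i by auto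
    then obtain c where c: "\<forall>x. length x = m \<longrightarrow> f x ! l = c" using f l unfolding Inv_def by blast
    have "\<forall>x. length x = m \<longrightarrow> rst m (g \<circ> f) x ! i = c"
      using f g l c unfolding Inv_def rst_def by auto
    then show ?thesis by blast
  qed
qed

lemma smor_Inv: "smor m n f \<Longrightarrow> \<exists>\<pi>. Inv m n f \<pi>"
proof (induction rule: smor.induct)
  case (sid n) then show ?case using Inv_id by blast
next
  case (sface i n a) then show ?case using Inv_face by blast
next
  case (ssym i n) then show ?case using Inv_swp by blast
next
  case (scomp m n f k g) then show ?case using Inv_comp by blast
qed

lemma Inv_unique: assumes f: "Inv m n f \<pi>" and j: "j < m" and i: "i < n"
  and h: "\<forall>x. length x = m \<longrightarrow> f x ! i = x ! j"
  shows "i = \<pi> j"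
proof (rule ccontr)
  assume ne: "i \<noteq> \<pi> j"
  show False
  proof (cases "i \<in> \<pi> ` {..<m}")
    case True
    then obtain j' where j': "j' < m" "i = \<pi> j'" by auto
    with ne have "j' \<noteq> j" by auto
    define x where "x = (replicate m False)[j := True]"
    have "length x = m" by (simp add: x_def)
    have "f x ! \<pi> j' = x ! j'" using InvD4[OF f \<open>length x = m\<close> j'(1)] .
    moreover have "f x ! i = x ! j" using h \<open>length x = m\<close> by blast
    ultimately have "x ! j' = x ! j" using j' by simp
    then show False using \<open>j' \<noteq> j\<close> j j'(1) by (simp add: x_def)
  next
    case False
    then obtain c where c: "\<forall>x. length x = m \<longrightarrow> f x ! i = c" using InvD5[OF f i] by blast
    have "c = replicate m False ! j" "c = replicate m True ! j"
      using c h by (metis length_replicate)+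
    then show False using j by simp
  qed
qed

definition pic :: "nat \<Rightarrow> nat \<Rightarrow> cmap \<Rightarrow> nat \<Rightarrow> nat" where
 "pic m n f j = (THE i. i < n \<and> (\<forall>x. length x = m \<longrightarrow> f x ! i = x ! j))"

lemma pic_eq: assumes "Inv m n f \<pi>" "j < m" shows "pic m n f j = \<pi> j"
  unfolding pic_def
proof (rule the_equality)
  show "\<pi> j < n \<and> (\<forall>x. length x = m \<longrightarrow> f x ! \<pi> j = x ! j)"
    using InvD2[OF assms] InvD4[OF assms(1) _ assms(2)] by blast
  fix i assume "i < n \<and> (\<forall>x. length x = m \<longrightarrow> f x ! i = x ! j)"
  then show "i = \<pi> j" using Inv_unique[OF assms(1) assms(2)] by blast
qed

lemma Inv_cong: "Inv m n f \<pi> \<Longrightarrow> (\<And>j. j < m \<Longrightarrow> \<pi>' j = \<pi> j) \<Longrightarrow> Inv m n f \<pi>'"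
proof -
  assume f: "Inv m n f \<pi>" and e: "\<And>j. j < m \<Longrightarrow> \<pi>' j = \<pi> j"
  have im: "\<pi>' ` {..<m} = \<pi> ` {..<m}" by (rule image_cong) (simp_all add: e)
  have "inj_on \<pi>' {..<m} = inj_on \<pi> {..<m}" by (rule inj_on_cong) (simp add: e)
  then have inj: "inj_on \<pi>' {..<m}" using InvD3[OF f] by simp
  show ?thesis unfolding Inv_def
  proof (intro conjI allI impI)
    fix x :: "bool list" assume "length x = m" then show "length (f x) = n" using InvD1[OF f] by blast
  next
    fix j assume "j < m" then show "\<pi>' j < n" using InvD2[OF f] e by simp
  next
    show "inj_on \<pi>' {..<m}" by (rule inj)
  next
    fix x :: "bool list" and j assume "length x = m \<and> j < m"
    then show "f x ! \<pi>' j = x ! j" using InvD4[OF f] e by simp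
  next
    fix i assume "i < n" "i \<notin> \<pi>' ` {..<m}"
    then show "\<exists>c. \<forall>x. length x = m \<longrightarrow> f x ! i = c" using InvD5[OF f] im by simp
  qed
qed

lemma smor_pic: "smor m n f \<Longrightarrow> Inv m n f (pic m n f)"
proof -
  assume "smor m n f"
  then obtain \<pi> where p: "Inv m n f \<pi>" using smor_Inv by blast
  have "\<And>j. j < m \<Longrightarrow> pic m n f j = \<pi> j" using pic_eq[OF p] .
  then show ?thesis using Inv_cong[OF p] by blast
qed


definition actZs :: "nat \<Rightarrow> nat \<Rightarrow> cmap \<Rightarrow> 'a list \<Rightarrow> 'a list" where
 "actZs m n f w = map (\<lambda>j. w ! pic m n f j) [0..<m]"

lemma smor_len: "smor m n f \<Longrightarrow> length x = m \<Longrightarrow> length (f x) = n"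
  using smor_pic InvD1 by blast

lemma smor_le: "smor m n f \<Longrightarrow> m \<le> n"
  by (induction rule: smor.induct) auto

lemma rst_rst: "rst m (rst m h) = rst m h"
  by (simp add: rst_def fun_eq_iff)

lemma smor_rst: "smor m n f \<Longrightarrow> rst m f = f"
  by (induction rule: smor.induct) (simp_all add: rst_rst)

lemma pmor_smor: "pmor m n f \<Longrightarrow> smor m n f"
  by (induction rule: pmor.induct) (auto intro: smor.intros)

lemma pic_lt: "smor m n f \<Longrightarrow> j < m \<Longrightarrow> pic m n f j < n"
  using smor_pic InvD2 by blast

lemma pic_comp: "smor m n f \<Longrightarrow> smor n k g \<Longrightarrow> j < m \<Longrightarrow>
   pic m k (rst m (g \<circ> f)) j = pic n k g (pic m n f j)"
proof -
  assume f: "smor m n f" and g: "smor n k g" and j: "j < m"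
  have "Inv m k (rst m (g \<circ> f)) (pic n k g \<circ> pic m n f)"
    by (rule Inv_comp[OF smor_pic[OF f] smor_pic[OF g]])
  from pic_eq[OF this j] show ?thesis by simp
qed

lemma pic_id: "j < n \<Longrightarrow> pic n n (rst n id) j = j"
  using pic_eq[OF Inv_id] by simp

lemma pic_face: "1 \<le> i \<Longrightarrow> i \<le> Suc n \<Longrightarrow> j < n \<Longrightarrow>
   pic n (Suc n) (rst n (face i a)) j = (if j < i - 1 then j else Suc j)"
  using pic_eq[OF Inv_face] by blast

lemma pic_swp: "1 \<le> i \<Longrightarrow> i < n \<Longrightarrow> j < n \<Longrightarrow> pic n n (rst n (swp i)) j = swpi i j"
  using pic_eq[OF Inv_swp] by blast

lemma actZs_len[simp]: "length (actZs m n f w) = m"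
  by (simp add: actZs_def)

lemma actZs_words: "smor m n f \<Longrightarrow> w \<in> words S n \<Longrightarrow> actZs m n f w \<in> words S m"
  unfolding words_def actZs_def
  by (auto dest!: pic_lt intro!: nth_mem[THEN subsetD[rotated]] )

lemma actZs_id: "length w = n \<Longrightarrow> actZs n n (rst n id) w = w"
  unfolding actZs_def by (rule nth_equalityI) (simp_all add: pic_id)

lemma actZs_comp: "smor m n f \<Longrightarrow> smor n k g \<Longrightarrow> length w = k \<Longrightarrow>
  actZs m k (rst m (g \<circ> f)) w = actZs m n f (actZs n k g w)"
  unfolding actZs_def by (rule nth_equalityI) (simp_all add: pic_comp pic_lt)

lemma actZs_face: "1 \<le> i \<Longrightarrow> i \<le> Suc n \<Longrightarrow> length w = Suc n \<Longrightarrow>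
  actZs n (Suc n) (rst n (face i a)) w = del i w"
  unfolding actZs_def by (rule nth_equalityI) (simp_all add: pic_face del_nth)

lemma actZs_swp: "1 \<le> i \<Longrightarrow> i < n \<Longrightarrow> length w = n \<Longrightarrow>
  actZs n n (rst n (swp i)) w = swp i w"
  unfolding actZs_def by (rule nth_equalityI) (auto simp add: pic_swp swp_nth swpi_def)

lemma presheaf_Z: "presheaf smor (words S) actZs"
  unfolding presheaf_def
proof (intro conjI allI impI)
  fix m n f x assume "smor m n f \<and> x \<in> words S n"
  then show "actZs m n f x \<in> words S m" using actZs_words by blast
next
  fix n x assume "x \<in> words S n" then show "actZs n n (rst n id) x = x"
    by (simp add: words_def actZs_id)
next
  fix m n k f g x assume "smor m n f \<and> smor n k g \<and> x \<in> words S k"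
  then show "actZs m k (rst m (g \<circ> f)) x = actZs m n f (actZs n k g x)"
    by (simp add: words_def actZs_comp)
qed


lemma face_nth0: "j \<le> length x \<Longrightarrow> p \<le> length x \<Longrightarrow>
  face (Suc j) a x ! p = (if p < j then x ! p else if p = j then a else x ! (p - 1))"
  using face_nth[of "Suc j" x p a] by simp

lemma swp_nth0: "Suc i < length x \<Longrightarrow> p < length x \<Longrightarrow>
  swp (Suc i) x ! p = (if p = i then x ! Suc i else if p = Suc i then x ! i else x ! p)"
  using swp_nth[of "Suc i" x p] by simp

lemma sf_a: "length x = K \<Longrightarrow> j \<le> i \<Longrightarrow> Suc i < K \<Longrightarrow>
  swp (Suc (Suc i)) (face (Suc j) a x) = face (Suc j) a (swp (Suc i) x)"
  apply (rule nth_equalityI)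
   apply simp
  subgoal for p
    by (cases "p < j"; cases "p = j"; cases "p = Suc i"; cases "p = Suc (Suc i)"; auto simp add: face_nth0 swp_nth0)
  done

lemma sf_b: "length x = K \<Longrightarrow> i < K \<Longrightarrow>
  swp (Suc i) (face (Suc i) a x) = face (Suc (Suc i)) a x"
  apply (rule nth_equalityI)
   apply simp
  subgoal for p
    by (cases "p < i"; cases "p = i"; cases "p = Suc i"; auto simp add: face_nth0 swp_nth0)
  done

lemma sf_c: "length x = K \<Longrightarrow> i < K \<Longrightarrow>
  swp (Suc i) (face (Suc (Suc i)) a x) = face (Suc i) a x"
  apply (rule nth_equalityI)
   apply simp
  subgoal for p
    by (cases "p < i"; cases "p = i"; cases "p = Suc i"; auto simp add: face_nth0 swp_nth0)
  done

lemma sf_d: "length x = K \<Longrightarrow> Suc i < j \<Longrightarrow> j \<le> K \<Longrightarrow>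
  swp (Suc i) (face (Suc j) a x) = face (Suc j) a (swp (Suc i) x)"
  apply (rule nth_equalityI)
   apply simp
  subgoal for p
    by (cases "p < j"; cases "p = j"; cases "p = i"; cases "p = Suc i"; auto simp add: face_nth0 swp_nth0)
  done


lemma factor_G: "smor k n g \<Longrightarrow> 1 \<le> j \<Longrightarrow> j \<le> k \<Longrightarrow>
  \<exists>j' a' g'. 1 \<le> j' \<and> j' \<le> n \<and> smor (k - 1) (n - 1) g' \<and>
     (\<forall>x. length x = k - 1 \<longrightarrow> g (face j a x) = face j' a' (g' x))"
proof (induction arbitrary: j a rule: smor.induct)
  case (sid n)
  have "\<forall>x. length x = n - 1 \<longrightarrow> rst n id (face j a x) = face j a (rst (n - 1) id x)"
    using sid by (auto simp: rst_def)
  then show ?case using sid smor.sid by blast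
next
  case (sface i n b)
  then obtain n0 where n: "n = Suc n0" by (cases n) auto
  have s: "smor n0 (Suc n0) (rst n0 (face j a))" using sface n by (intro smor.sface) auto
  have "\<forall>x. length x = n - 1 \<longrightarrow> rst n (face i b) (face j a x) = face i b (rst n0 (face j a) x)"
    using sface n by (auto simp: rst_def)
  then show ?case using sface s n by auto
next
  case (ssym i n)
  obtain i0 where i0: "i = Suc i0" using ssym by (cases i) auto
  obtain j0 where j0: "j = Suc j0" using ssym by (cases j) auto
  obtain K where K: "n = Suc K" using ssym by (cases n) auto
  show ?case
  proof (cases "j0 < i0")
    case True
    then obtain i2 where i2: "i0 = Suc i2" by (cases i0) auto
    have s: "smor K K (rst K (swp (Suc i2)))" using ssym i0 i2 K by (intro smor.ssym) auto
    have "\<forall>x. length x = n - 1 \<longrightarrow> rst n (swp i) (face j a x) = face j a (rst K (swp (Suc i2)) x)"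
      using ssym i0 i2 K j0 True sf_a[of _ K j0 i2 a] by (auto simp: rst_def)
    then show ?thesis using s K ssym by auto
  next
    case False
    show ?thesis
    proof (cases "j0 = i0")
      case True
      have "\<forall>x. length x = n - 1 \<longrightarrow> rst n (swp i) (face j a x) = face (Suc j) a (rst K id x)"
        using ssym i0 K j0 True sf_b[of _ K i0 a] by (auto simp: rst_def)
      then show ?thesis using K ssym True i0 j0 smor.sid[of K] by (intro exI[of _ "Suc j"] exI[of _ a] exI[of _ "rst K id"]) auto
    next
      case False2: False
      show ?thesis
      proof (cases "j0 = Suc i0")
        case True
        have "\<forall>x. length x = n - 1 \<longrightarrow> rst n (swp i) (face j a x) = face i a (rst K id x)"
          using ssym i0 K j0 True sf_c[of _ K i0 a] by (auto simp: rst_def)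
        then show ?thesis using K ssym True i0 j0 smor.sid[of K] by (intro exI[of _ i] exI[of _ a] exI[of _ "rst K id"]) auto
      next
        case False3: False
        have s: "smor K K (rst K (swp (Suc i0)))" using ssym i0 K j0 False False2 False3 by (intro smor.ssym) auto
        have "\<forall>x. length x = n - 1 \<longrightarrow> rst n (swp i) (face j a x) = face j a (rst K (swp (Suc i0)) x)"
          using ssym i0 K j0 False False2 False3 sf_d[of _ K i0 j0 a] by (auto simp: rst_def)
        then show ?thesis using s K ssym by auto
      qed
    qed
  qed
next
  case (scomp m n f k g)
  obtain j1 a1 f' where f': "1 \<le> j1" "j1 \<le> n" "smor (m - 1) (n - 1) f'"
    "\<forall>x. length x = m - 1 \<longrightarrow> f (face j a x) = face j1 a1 (f' x)"
    using scomp.IH(1)[OF scomp.prems] by blast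
  obtain j2 a2 g' where g': "1 \<le> j2" "j2 \<le> k" "smor (n - 1) (k - 1) g'"
    "\<forall>y. length y = n - 1 \<longrightarrow> g (face j1 a1 y) = face j2 a2 (g' y)"
    using scomp.IH(2)[OF f'(1,2)] by blast
  have s: "smor (m - 1) (k - 1) (rst (m - 1) (g' \<circ> f'))" using f'(3) g'(3) by (rule smor.scomp)
  have "\<forall>x. length x = m - 1 \<longrightarrow> rst m (g \<circ> f) (face j a x) = face j2 a2 (rst (m - 1) (g' \<circ> f') x)"
    using scomp.prems f'(4) g'(4) smor_len[OF f'(3)] by (auto simp: rst_def)
  then show ?case using s g'(1,2) by blast
qed

lemma factor_F: "smor m n \<chi> \<Longrightarrow> m < n \<Longrightarrow>
  \<exists>j a \<chi>'. 1 \<le> j \<and> j \<le> n \<and> smor m (n - 1) \<chi>' \<and>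
     (\<forall>x. length x = m \<longrightarrow> \<chi> x = face j a (\<chi>' x))"
proof (induction rule: smor.induct)
  case (sface i n a)
  have "\<forall>x. length x = n \<longrightarrow> rst n (face i a) x = face i a (rst n id x)"
    using sface by (auto simp: rst_def)
  then show ?case using sface smor.sid[of n] by (intro exI[of _ i] exI[of _ a] exI[of _ "rst n id"]) auto
next
  case (scomp m n f k g)
  have nk: "n \<le> k" using scomp.hyps(2) by (rule smor_le)
  show ?case
  proof (cases "n < k")
    case True
    obtain j a g' where g': "1 \<le> j" "j \<le> k" "smor n (k - 1) g'"
      "\<forall>y. length y = n \<longrightarrow> g y = face j a (g' y)" using scomp.IH(2)[OF True] by blast
    have s: "smor m (k - 1) (rst m (g' \<circ> f))" using scomp.hyps(1) g'(3) by (rule smor.scomp)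
    have "\<forall>x. length x = m \<longrightarrow> rst m (g \<circ> f) x = face j a (rst m (g' \<circ> f) x)"
      using g'(4) smor_len[OF scomp.hyps(1)] by (auto simp: rst_def)
    then show ?thesis using s g'(1,2) by blast
  next
    case False
    with nk have nk: "n = k" by simp
    with scomp.prems have mn: "m < n" by simp
    obtain j a f' where f': "1 \<le> j" "j \<le> n" "smor m (n - 1) f'"
      "\<forall>x. length x = m \<longrightarrow> f x = face j a (f' x)" using scomp.IH(1)[OF mn] by blast
    obtain j2 a2 g' where g': "1 \<le> j2" "j2 \<le> k" "smor (n - 1) (k - 1) g'"
      "\<forall>y. length y = n - 1 \<longrightarrow> g (face j a y) = face j2 a2 (g' y)"
      using factor_G[OF scomp.hyps(2) f'(1,2)] by blast
    have s: "smor m (k - 1) (rst m (g' \<circ> f'))" using f'(3) g'(3) by (rule smor.scomp)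
    have "\<forall>x. length x = m \<longrightarrow> rst m (g \<circ> f) x = face j2 a2 (rst m (g' \<circ> f') x)"
      using f'(4) g'(4) smor_len[OF f'(3)] by (auto simp: rst_def)
    then show ?thesis using s g'(1,2) by blast
  qed
qed auto


lemma presheafD:
  assumes "presheaf M X act"
  shows presheafD1: "\<And>m n f x. M m n f \<Longrightarrow> x \<in> X n \<Longrightarrow> act m n f x \<in> X m"
  and presheafD2: "\<And>n x. x \<in> X n \<Longrightarrow> act n n (rst n id) x = x"
  and presheafD3: "\<And>m n k f g x. M m n f \<Longrightarrow> M n k g \<Longrightarrow> x \<in> X k \<Longrightarrow>
        act m k (rst m (g \<circ> f)) x = act m n f (act n k g x)"
  using assms unfolding presheaf_def by blast+

lemma nat_transD:
  assumes "nat_trans M X actX Y actY h"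
  shows nat_transD1: "\<And>n x. x \<in> X n \<Longrightarrow> h n x \<in> Y n"
  and nat_transD2: "\<And>m n f x. M m n f \<Longrightarrow> x \<in> X n \<Longrightarrow> h m (actX m n f x) = actY m n f (h n x)"
  using assms unfolding nat_trans_def by blast+

lemma factor_F': "smor m n \<chi> \<Longrightarrow> m < n \<Longrightarrow>
  \<exists>j a \<chi>'. 1 \<le> j \<and> j \<le> n \<and> smor (n - 1) n (rst (n - 1) (face j a)) \<and> smor m (n - 1) \<chi>' \<and>
     \<chi> = rst m (rst (n - 1) (face j a) \<circ> \<chi>')"
proof -
  assume c: "smor m n \<chi>" and mn: "m < n"
  obtain j a \<chi>' where f: "1 \<le> j" "j \<le> n" "smor m (n - 1) \<chi>'"
     "\<forall>x. length x = m \<longrightarrow> \<chi> x = face j a (\<chi>' x)" using factor_F[OF c mn] by blast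
  have s: "smor (n - 1) n (rst (n - 1) (face j a))"
    using f mn smor.sface[of j "n - 1" a] by simp
  have "\<chi> = rst m \<chi>" using smor_rst[OF c] by simp
  also have "\<dots> = rst m (rst (n - 1) (face j a) \<circ> \<chi>')"
    using f(4) smor_len[OF f(3)] by (auto simp: rst_def fun_eq_iff)
  finally show ?thesis using s f(1,2,3) by blast
qed

lemma words_eq_del: "length u = p \<Longrightarrow> length v = p \<Longrightarrow> 2 \<le> p \<Longrightarrow>
  del 1 u = del 1 v \<Longrightarrow> del p u = del p v \<Longrightarrow> u = v"
proof -
  assume l: "length u = p" "length v = p" "2 \<le> p" and d1: "del 1 u = del 1 v" and dp: "del p u = del p v"
  have a: "drop 1 u = drop 1 v" using d1 by (simp add: del_def)
  have b: "take (p - 1) u = take (p - 1) v" using dp l by (simp add: del_def)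
  show "u = v"
  proof (rule nth_equalityI)
    fix k assume k: "k < length u"
    show "u ! k = v ! k"
    proof (cases k)
      case 0
      then show ?thesis using arg_cong[OF b, of "\<lambda>l. l ! 0"] l by simp
    next
      case (Suc k')
      then show ?thesis using arg_cong[OF a, of "\<lambda>l. l ! k'"] l k by simp
    qed
  qed (simp add: l)
qed

lemma actK_eq:
  assumes P: "presheaf pmor (words S) actK"
    and Fa: "\<forall>n i a w. 1 \<le> i \<and> i \<le> Suc n \<and> w \<in> words S (Suc n) \<longrightarrow>
           actK n (Suc n) (rst n (face i a)) w = del i w"
  shows "pmor m n f \<Longrightarrow> w \<in> words S n \<Longrightarrow> actK m n f w = actZs m n f w"
proof (induction arbitrary: w rule: pmor.induct)
  case (pid n)
  have "length w = n" using pid.prems by (simp add: words_def)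
  then show ?case using presheafD2[OF P pid.prems] actZs_id[of w n] by simp
next
  case (pface i n a)
  then have "actK n (Suc n) (rst n (face i a)) w = del i w" using Fa by blast
  moreover have "actZs n (Suc n) (rst n (face i a)) w = del i w"
    using pface actZs_face[of i n w a] by (simp add: words_def)
  ultimately show ?case by simp
next
  case (pcomp m n f k g)
  have "actK m k (rst m (g \<circ> f)) w = actK m n f (actK n k g w)"
    using presheafD3[OF P pcomp.hyps pcomp.prems] .
  also have "\<dots> = actK m n f (actZs n k g w)" using pcomp.IH(2)[OF pcomp.prems] by simp
  also have "\<dots> = actZs m n f (actZs n k g w)"
    using pcomp.IH(1)[OF actZs_words[OF pmor_smor[OF pcomp.hyps(2)] pcomp.prems]] by simp
  also have "\<dots> = actZs m k (rst m (g \<circ> f)) w"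
    using actZs_comp[OF pmor_smor[OF pcomp.hyps(1)] pmor_smor[OF pcomp.hyps(2)], of w] pcomp.prems
    by (simp add: words_def)
  finally show ?case .
qed

lemma orth_Z: assumes p: "2 \<le> p" shows "orthogonal_to p (words S) actZs"
  unfolding orthogonal_to_def
proof (intro allI impI)
  fix h assume H: "nat_trans smor (po p) (po_act p) (words S) actZs h"
  note H1 = nat_transD1[OF H] and H2 = nat_transD2[OF H]
  define g where "g = (\<lambda>n \<phi>. h n (False, \<phi>))"
  have G: "nat_trans smor (rep p) rep_act (words S) actZs g"
    unfolding nat_trans_def
  proof (intro conjI allI impI)
    fix n \<phi> assume "\<phi> \<in> rep p n"
    then show "g n \<phi> \<in> words S n" unfolding g_def using H1 by (simp add: rep_def po_def)
  next
    fix m n f \<phi> assume a: "smor m n f \<and> \<phi> \<in> rep p n"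
    then have "(False, \<phi>) \<in> po p n" by (simp add: rep_def po_def)
    from H2[OF conjunct1[OF a] this]
    show "g m (rep_act m n f \<phi>) = actZs m n f (g n \<phi>)"
      by (simp add: g_def rep_act_def po_act_def)
  qed
  have E: "eq_on (po p) (\<lambda>n x. g n (codiag n x)) h"
    unfolding eq_on_def
  proof (intro allI ballI)
    fix n x assume x: "x \<in> po p n"
    obtain b \<phi> where bx: "x = (b, \<phi>)" by (cases x)
    have s: "smor n p \<phi>" and bn: "n < p \<longrightarrow> \<not> b" using x bx by (auto simp: po_def)
    show "g n (codiag n x) = h n x"
    proof (cases b)
      case False then show ?thesis by (simp add: bx g_def codiag_def)
    next
      case True
      with bn smor_le[OF s] have np: "n = p" by simp
      have inF: "(False, \<phi>) \<in> po p p" and inT: "(True, \<phi>) \<in> po p p" using s np by (auto simp: po_def)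
      have dl: "del i (h p (False, \<phi>)) = del i (h p (True, \<phi>))" if i: "1 \<le> i" "i \<le> p" for i
      proof -
        have sf: "smor (p - 1) p (rst (p - 1) (face i False))"
          using smor.sface[of i "p - 1" False] i p by simp
        have w1: "h p (False, \<phi>) \<in> words S (Suc (p - 1))" "h p (True, \<phi>) \<in> words S (Suc (p - 1))"
          using H1[OF inF] H1[OF inT] p by simp_all
        have "del i (h p (False, \<phi>)) = actZs (p - 1) p (rst (p - 1) (face i False)) (h p (False, \<phi>))"
          using actZs_face[of i "p - 1" "h p (False, \<phi>)" False] w1 i p by (simp add: words_def)
        also have "\<dots> = h (p - 1) (po_act p (p - 1) p (rst (p - 1) (face i False)) (False, \<phi>))"
          using H2[OF sf inF] by simp
        also have "\<dots> = h (p - 1) (po_act p (p - 1) p (rst (p - 1) (face i False)) (True, \<phi>))"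
          using p by (simp add: po_act_def)
        also have "\<dots> = actZs (p - 1) p (rst (p - 1) (face i False)) (h p (True, \<phi>))"
          using H2[OF sf inT] by simp
        also have "\<dots> = del i (h p (True, \<phi>))"
          using actZs_face[of i "p - 1" "h p (True, \<phi>)" False] w1 i p by (simp add: words_def)
        finally show ?thesis .
      qed
      have "h p (False, \<phi>) = h p (True, \<phi>)"
        using words_eq_del[OF _ _ p dl[of 1] dl[of p]] H1[OF inF] H1[OF inT] p
        by (simp add: words_def)
      then show ?thesis using True np by (simp add: bx g_def codiag_def)
    qed
  qed
  show "\<exists>g. nat_trans smor (rep p) rep_act (words S) actZs g \<and>
             eq_on (po p) (\<lambda>n x. g n (codiag n x)) h \<and>
             (\<forall>g'. nat_trans smor (rep p) rep_act (words S) actZs g' \<and>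
                   eq_on (po p) (\<lambda>n x. g' n (codiag n x)) h \<longrightarrow> eq_on (rep p) g g')"
  proof (intro exI conjI allI impI)
    show "nat_trans smor (rep p) rep_act (words S) actZs g" by (rule G)
    show "eq_on (po p) (\<lambda>n x. g n (codiag n x)) h" by (rule E)
    fix g' assume "nat_trans smor (rep p) rep_act (words S) actZs g' \<and>
                   eq_on (po p) (\<lambda>n x. g' n (codiag n x)) h"
    then have e: "eq_on (po p) (\<lambda>n x. g' n (codiag n x)) h" by blast
    show "eq_on (rep p) g g'"
      unfolding eq_on_def
    proof (intro allI ballI)
      fix n \<phi> assume "\<phi> \<in> rep p n"
      then have "(False, \<phi>) \<in> po p n" by (simp add: rep_def po_def)
      with e have "g' n (codiag n (False, \<phi>)) = h n (False, \<phi>)" unfolding eq_on_def by blast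
      then show "g n \<phi> = g' n \<phi>" by (simp add: g_def codiag_def)
    qed
  qed
qed

lemma sheaf_Z: "sheaf (words S) actZs"
  unfolding sheaf_def using presheaf_Z orth_Z by blast


locale univ_setup =
  fixes S :: "'a set" and actK :: "nat \<Rightarrow> nat \<Rightarrow> cmap \<Rightarrow> 'a list \<Rightarrow> 'a list"
    and Y :: "nat \<Rightarrow> 'b set" and actY and F :: "nat \<Rightarrow> 'a list \<Rightarrow> 'b"
  assumes P: "presheaf pmor (words S) actK"
    and Fa: "\<forall>n i a w. 1 \<le> i \<and> i \<le> Suc n \<and> w \<in> words S (Suc n) \<longrightarrow>
           actK n (Suc n) (rst n (face i a)) w = del i w"
    and SY: "sheaf Y actY"
    and NF: "nat_trans pmor (words S) actK Y actY F"
begin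

lemma PY: "presheaf smor Y actY" using SY by (simp add: sheaf_def)

lemma FY: "w \<in> words S n \<Longrightarrow> F n w \<in> Y n" using nat_transD1[OF NF] .

lemma FF: "1 \<le> j \<Longrightarrow> j \<le> Suc n \<Longrightarrow> w \<in> words S (Suc n) \<Longrightarrow>
  F n (actZs n (Suc n) (rst n (face j a)) w) = actY n (Suc n) (rst n (face j a)) (F (Suc n) w)"
proof -
  assume j: "1 \<le> j" "j \<le> Suc n" and w: "w \<in> words S (Suc n)"
  have pm: "pmor n (Suc n) (rst n (face j a))" using j by (rule pmor.pface)
  have e: "actK n (Suc n) (rst n (face j a)) w = actZs n (Suc n) (rst n (face j a)) w"
    using actK_eq[OF P Fa] pm w by blast
  have t: "F n (actK n (Suc n) (rst n (face j a)) w) = actY n (Suc n) (rst n (face j a)) (F (Suc n) w)"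
    using nat_transD2[OF NF] pm w by blast
  show ?thesis using t e by simp
qed


definition Sw :: "nat \<Rightarrow> bool" where
  "Sw n \<longleftrightarrow> (\<forall>i w. 1 \<le> i \<and> i < n \<and> w \<in> words S n \<longrightarrow>
     F n (actZs n n (rst n (swp i)) w) = actY n n (rst n (swp i)) (F n w))"

lemma natA: "smor m n \<chi> \<Longrightarrow> (\<forall>n'\<le>n. Sw n') \<Longrightarrow> w \<in> words S n \<Longrightarrow>
  F m (actZs m n \<chi> w) = actY m n \<chi> (F n w)"
proof (induction arbitrary: w rule: smor.induct)
  case (sid n)
  then show ?case using presheafD2[OF PY FY[OF sid.prems(2)]] actZs_id[of w n] by (simp add: words_def)
next
  case (sface i n a)
  show ?case using FF[OF sface.hyps sface.prems(2)] .
next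
  case (ssym i n)
  have "Sw n" using ssym.prems(1) by simp
  then show ?case using ssym.hyps ssym.prems(2) unfolding Sw_def by blast
next
  case (scomp m n f k g)
  have nk: "n \<le> k" using scomp.hyps(2) by (rule smor_le)
  have wk: "actZs n k g w \<in> words S n" using actZs_words[OF scomp.hyps(2) scomp.prems(2)] .
  have "F m (actZs m k (rst m (g \<circ> f)) w) = F m (actZs m n f (actZs n k g w))"
    using actZs_comp[OF scomp.hyps, of w] scomp.prems(2) by (simp add: words_def)
  also have "\<dots> = actY m n f (F n (actZs n k g w))"
    using scomp.IH(1)[OF _ wk] scomp.prems(1) nk by simp
  also have "\<dots> = actY m n f (actY n k g (F k w))"
    using scomp.IH(2)[OF scomp.prems] by simp
  also have "\<dots> = actY m k (rst m (g \<circ> f)) (F k w)"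
    using presheafD3[OF PY scomp.hyps FY[OF scomp.prems(2)]] by simp
  finally show ?case .
qed

lemma natK: assumes IH: "\<forall>k<n. Sw k" and c: "smor m n \<chi>" and mn: "m < n" and w: "w \<in> words S n"
  shows "actY m n \<chi> (F n w) = F m (actZs m n \<chi> w)"
proof -
  obtain n0 where n: "n = Suc n0" using mn by (cases n) auto
  obtain j a \<chi>' where f: "1 \<le> j" "j \<le> n" "smor n0 n (rst n0 (face j a))" "smor m n0 \<chi>'"
     "\<chi> = rst m (rst n0 (face j a) \<circ> \<chi>')" using factor_F'[OF c mn] n by auto
  define \<delta> where "\<delta> = rst n0 (face j a)"
  have d: "smor n0 n \<delta>" using f(3) by (simp add: \<delta>_def)
  have "actY m n \<chi> (F n w) = actY m n0 \<chi>' (actY n0 n \<delta> (F n w))"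
    using presheafD3[OF PY f(4) d FY[OF w]] f(5) by (simp add: \<delta>_def)
  also have "actY n0 n \<delta> (F n w) = F n0 (actZs n0 n \<delta> w)"
    using FF[of j n0 w a] f(1,2) w n by (simp add: \<delta>_def)
  also have "actY m n0 \<chi>' (F n0 (actZs n0 n \<delta> w)) = F m (actZs m n0 \<chi>' (actZs n0 n \<delta> w))"
    using natA[OF f(4) _ actZs_words[OF d w]] IH n by simp
  also have "actZs m n0 \<chi>' (actZs n0 n \<delta> w) = actZs m n \<chi> w"
    using actZs_comp[OF f(4) d, of w] w f(5) by (simp add: \<delta>_def words_def)
  finally show ?thesis .
qed

lemma Sw_all: "Sw n"
proof (induction n rule: less_induct)
  case (less n)
  then have IH: "\<forall>k<n. Sw k" by blast
  show ?case unfolding Sw_def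
  proof (intro allI impI)
    fix i w assume a: "1 \<le> i \<and> i < n \<and> w \<in> words S n"
    then have w: "w \<in> words S n" and n2: "2 \<le> n" by auto
    define s where "s = rst n (swp i)"
    have ss: "smor n n s" using a by (simp add: s_def smor.ssym)
    have ws: "actZs n n s w \<in> words S n" using actZs_words[OF ss w] .
    define y1 where "y1 = F n (actZs n n s w)"
    define y2 where "y2 = actY n n s (F n w)"
    have y1: "y1 \<in> Y n" using FY[OF ws] by (simp add: y1_def)
    have y2: "y2 \<in> Y n" using presheafD1[OF PY ss FY[OF w]] by (simp add: y2_def)
    have key: "actY m n \<chi> y1 = actY m n \<chi> y2" if c: "smor m n \<chi>" and mn: "m < n" for m \<chi>
    proof -
      have c2: "smor m n (rst m (s \<circ> \<chi>))" using c ss by (rule smor.scomp)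
      have "actY m n \<chi> y1 = F m (actZs m n \<chi> (actZs n n s w))"
        unfolding y1_def using natK[OF IH c mn ws] .
      also have "\<dots> = F m (actZs m n (rst m (s \<circ> \<chi>)) w)"
        using actZs_comp[OF c ss, of w] w by (simp add: words_def)
      also have "\<dots> = actY m n (rst m (s \<circ> \<chi>)) (F n w)"
        using natK[OF IH c2 mn w] by simp
      also have "\<dots> = actY m n \<chi> y2"
        unfolding y2_def using presheafD3[OF PY c ss FY[OF w]] .
      finally show ?thesis .
    qed
    define h where "h = (\<lambda>m (bf :: bool \<times> cmap). actY m n (snd bf) (if fst bf then y1 else y2))"
    have H: "nat_trans smor (po n) (po_act n) Y actY h"
      unfolding nat_trans_def
    proof (intro conjI allI impI)
      fix m x assume "x \<in> po n m"
      then show "h m x \<in> Y m" using presheafD1[OF PY _ y1] presheafD1[OF PY _ y2]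
        by (auto simp: h_def po_def)
    next
      fix m k \<psi> x assume a2: "smor m k \<psi> \<and> x \<in> po n k"
      obtain b \<phi> where x: "x = (b, \<phi>)" by (cases x)
      have \<psi>: "smor m k \<psi>" and \<phi>: "smor k n \<phi>" using a2 x by (auto simp: po_def)
      have c: "smor m n (rst m (\<phi> \<circ> \<psi>))" using \<psi> \<phi> by (rule smor.scomp)
      have r: "actY m k \<psi> (h k x) = actY m n (rst m (\<phi> \<circ> \<psi>)) (if b then y1 else y2)"
        using presheafD3[OF PY \<psi> \<phi>] y1 y2 by (simp add: h_def x)
      show "h m (po_act n m k \<psi> x) = actY m k \<psi> (h k x)"
        using r key[OF c] by (cases b; cases "m < n") (simp_all add: h_def x po_act_def)
    qed
    obtain g where E: "eq_on (po n) (\<lambda>n x. g n (codiag n x)) h"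
      using SY n2 unfolding sheaf_def orthogonal_to_def using H by blast
    have id: "smor n n (rst n id)" by (rule smor.sid)
    have i1: "(True, rst n id) \<in> po n n" using id by (simp add: po_def)
    have i2: "(False, rst n id) \<in> po n n" using id by (simp add: po_def)
    have e1: "g n (rst n id) = h n (True, rst n id)"
      using E i1 unfolding eq_on_def codiag_def by force
    have e2: "g n (rst n id) = h n (False, rst n id)"
      using E i2 unfolding eq_on_def codiag_def by force
    from e1 e2 have "y1 = y2" using presheafD2[OF PY y1] presheafD2[OF PY y2] by (simp add: h_def)
    then show "F n (actZs n n (rst n (swp i)) w) = actY n n (rst n (swp i)) (F n w)"
      by (simp add: y1_def y2_def s_def)
  qed
qed

lemma univ: "nat_trans smor (words S) actZs Y actY F"
  unfolding nat_trans_def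
proof (intro conjI allI impI)
  fix n x assume "x \<in> words S n" then show "F n x \<in> Y n" by (rule FY)
next
  fix m n f x assume "smor m n f \<and> x \<in> words S n"
  then show "F m (actZs m n f x) = actY m n f (F n x)" using natA Sw_all by blast
qed

end


theorem proposition11p3:
  fixes S :: "'a set"
    and actK :: "nat \<Rightarrow> nat \<Rightarrow> cmap \<Rightarrow> 'a list \<Rightarrow> 'a list"
  assumes "S \<noteq> {}"
    and "presheaf pmor (words S) actK"
    and "\<forall>n i a w. 1 \<le> i \<and> i \<le> Suc n \<and> w \<in> words S (Suc n) \<longrightarrow>
           actK n (Suc n) (rst n (face i a)) w = del i w"
  shows "\<exists>actZ.
    presheaf smor (words S) actZ \<and>
    (\<forall>n i a w. 1 \<le> i \<and> i \<le> Suc n \<and> w \<in> words S (Suc n) \<longrightarrow>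
       actZ n (Suc n) (rst n (face i a)) w = del i w) \<and>
    (\<forall>n i w. 1 \<le> i \<and> i < n \<and> w \<in> words S n \<longrightarrow>
       actZ n n (rst n (swp i)) w = swp i w) \<and>
    sheaf (words S) actZ \<and>
    nat_trans pmor (words S) actK (words S) actZ (\<lambda>n w. w) \<and>
    (\<forall>(Y :: nat \<Rightarrow> 'b set) actY f.
       sheaf Y actY \<and> nat_trans pmor (words S) actK Y actY f \<longrightarrow>
       (\<exists>g. nat_trans smor (words S) actZ Y actY g \<and> eq_on (words S) g f \<and>
            (\<forall>g'. nat_trans smor (words S) actZ Y actY g' \<and> eq_on (words S) g' f \<longrightarrow>
                  eq_on (words S) g g')))"
proof -
  have face: "\<forall>n i a w. 1 \<le> i \<and> i \<le> Suc n \<and> w \<in> words S (Suc n) \<longrightarrow>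
       actZs n (Suc n) (rst n (face i a)) w = del i w"
    using actZs_face by (auto simp: words_def)
  have swp: "\<forall>n i w. 1 \<le> i \<and> i < n \<and> w \<in> words S n \<longrightarrow>
       actZs n n (rst n (swp i)) w = swp i w"
    using actZs_swp by (auto simp: words_def)
  have nt: "nat_trans pmor (words S) actK (words S) actZs (\<lambda>n w. w)"
    unfolding nat_trans_def
  proof (intro conjI allI impI)
    fix m n f x assume a: "pmor m n f \<and> x \<in> words S n"
    have "actK m n f x = actZs m n f x" using actK_eq[OF assms(2) assms(3)] a by blast
    then show "actK m n f x = actZs m n f x" .
  qed simp
  have un: "\<forall>(Y :: nat \<Rightarrow> 'b set) actY f.
       sheaf Y actY \<and> nat_trans pmor (words S) actK Y actY f \<longrightarrow>
       (\<exists>g. nat_trans smor (words S) actZs Y actY g \<and> eq_on (words S) g f \<and>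
            (\<forall>g'. nat_trans smor (words S) actZs Y actY g' \<and> eq_on (words S) g' f \<longrightarrow>
                  eq_on (words S) g g'))"
  proof (intro allI impI)
    fix Y :: "nat \<Rightarrow> 'b set" and actY f
    assume a: "sheaf Y actY \<and> nat_trans pmor (words S) actK Y actY f"
    have loc: "univ_setup S actK Y actY f"
      using assms(2,3) a by (simp add: univ_setup_def)
    have u: "nat_trans smor (words S) actZs Y actY f" using univ_setup.univ[OF loc] .
    show "\<exists>g. nat_trans smor (words S) actZs Y actY g \<and> eq_on (words S) g f \<and>
            (\<forall>g'. nat_trans smor (words S) actZs Y actY g' \<and> eq_on (words S) g' f \<longrightarrow>
                  eq_on (words S) g g')"
      using u by (intro exI[of _ f]) (auto simp: eq_on_def)
  qed
  show ?thesis
    apply (rule exI[of _ actZs])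
    using presheaf_Z face swp sheaf_Z nt un by blast
qed

end
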